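(* Let $S$ be a Stone relation algebra with at least one additional hypothesis, namely that $S$ satisfies the point axiom: the set $\mathrm{IP}(S)$ of ideal-points of $S$ is finite and non-empty and $\top = \bigsqcup \mathrm{IP}(S)$. Let $\mathrm{I}(S)$ be the set of ideals of $S$ and $\mathrm{M}(S) = \mathrm{I}(S)^{\mathrm{IP}(S)\times\mathrm{IP}(S)}$ the set of matrices indexed by $\mathrm{IP}(S)$ with entries in $\mathrm{I}(S)$. Then: (1) $\mathrm{M}(S)$ is a Stone relation algebra, where $\sqcup$, $\sqcap$, the pseudocomplement, $\bot$ and $\top$ are lifted componentwise from $\mathrm{I}(S)$, and composition, converse and identity are given by $(XY)_{p,q} = \bigsqcup\{X_{p,r}\sqcap Y_{r,q} \mid r\in\mathrm{IP}(S)\}$, $(X^{\smile})_{p,q} = X_{q,p}$, and $1_{p,q} = \top$ if $p=q$ and $1_{p,q}=\bot$ if $p\neq q$. (2) The functions $f : S\to\mathrm{M}(S)$, $f(x)_{p,q} = p^{\smile} x q$, and $g : \mathrm{M}(S)\to S$, $g(X) = \bigsqcup\{p\, X_{p,q}\, q^{\smile} \mid p,q\in\mathrm{IP}(S)\}$, are isomorphisms (of Stone relation algebras) between $S$ and $\mathrm{M}(S)$.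
   Context: A Stone relation algebra is a structure $(S,\sqcup,\sqcap,\cdot,\overline{\,\cdot\,},{}^{\smile},\bot,\top,1)$ (write $xy$ for $x\cdot y$, $\overline{x}$ for the pseudocomplement, $x^{\smile}$ for the converse) such that: $(S,\sqcup,\sqcap,\bot,\top)$ is a bounded distributive lattice with order $x\sqsubseteq y\iff x\sqcup y=y$; $x\sqcap y=\bot\iff x\sqsubseteq\overline{y}$ for all $x,y$; $\overline{x}\sqcup\overline{\overline{x}}=\top$; $\cdot$ is associative with two-sided unit $1$, distributes over $\sqcup$ on both sides, and $\bot$ is a zero of $\cdot$; $x^{\smile\smile}=x$, $(xy)^{\smile}=y^{\smile}x^{\smile}$, $(x\sqcup y)^{\smile}=x^{\smile}\sqcup y^{\smile}$; $\overline{\overline{1}}=1$; $\overline{\overline{xy}}=\overline{\overline{x}}\,\overline{\overline{y}}$; and $xy\sqcap z\sqsubseteq x(y\sqcap x^{\smile}z)$ for all $x,y,z$. For finite non-empty $P\subseteq S$, $\bigsqcup P$ is the join of its elements. An element $x$ is injective if $xx^{\smile}\sqsubseteq 1$, surjective if $1\sqsubseteq x^{\smile}x$, bijective if injective and surjective, a vector if $x\top=x$, a covector if $\top x=x$, a point if it is a bijective vector, and an ideal if it is both a vector and a covector. An ideal-point is a point $p$ such that for all points $q$ and all ideals $x\neq\bot$, $qx\sqsubseteq p$ implies $q\sqsubseteq p$. *)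

theory Defs
  imports Main "HOL-Library.FuncSet"
begin

record 'a sra =
  car :: "'a set"
  jn  :: "'a \<Rightarrow> 'a \<Rightarrow> 'a"
  mt  :: "'a \<Rightarrow> 'a \<Rightarrow> 'a"
  cmp :: "'a \<Rightarrow> 'a \<Rightarrow> 'a"
  pcm :: "'a \<Rightarrow> 'a"
  cnv :: "'a \<Rightarrow> 'a"
  bt  :: "'a"
  tp  :: "'a"
  un  :: "'a"

definition le :: "'a sra \<Rightarrow> 'a \<Rightarrow> 'a \<Rightarrow> bool" where
  "le A x y \<longleftrightarrow> jn A x y = y"

definition stone_ra :: "'a sra \<Rightarrow> bool" where
  "stone_ra A \<longleftrightarrow>
    \<comment> \<open>closure\<close>
    bt A \<in> car A \<and> tp A \<in> car A \<and> un A \<in> car A \<and>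
    (\<forall>x\<in>car A. \<forall>y\<in>car A. jn A x y \<in> car A \<and> mt A x y \<in> car A \<and> cmp A x y \<in> car A) \<and>
    (\<forall>x\<in>car A. pcm A x \<in> car A \<and> cnv A x \<in> car A) \<and>
    \<comment> \<open>bounded distributive lattice\<close>
    (\<forall>x\<in>car A. \<forall>y\<in>car A. \<forall>z\<in>car A.
       jn A (jn A x y) z = jn A x (jn A y z) \<and> mt A (mt A x y) z = mt A x (mt A y z) \<and>
       mt A x (jn A y z) = jn A (mt A x y) (mt A x z)) \<and>
    (\<forall>x\<in>car A. \<forall>y\<in>car A.
       jn A x y = jn A y x \<and> mt A x y = mt A y x \<and>
       jn A x (mt A x y) = x \<and> mt A x (jn A x y) = x) \<and>
    (\<forall>x\<in>car A. jn A x x = x \<and> mt A x x = x \<and> jn A (bt A) x = x \<and> mt A (tp A) x = x) \<and>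
    \<comment> \<open>pseudocomplement, Stone identity\<close>
    (\<forall>x\<in>car A. \<forall>y\<in>car A. mt A x y = bt A \<longleftrightarrow> le A x (pcm A y)) \<and>
    (\<forall>x\<in>car A. jn A (pcm A x) (pcm A (pcm A x)) = tp A) \<and>
    \<comment> \<open>composition: monoid, distributes over join, bottom is zero\<close>
    (\<forall>x\<in>car A. \<forall>y\<in>car A. \<forall>z\<in>car A.
       cmp A (cmp A x y) z = cmp A x (cmp A y z) \<and>
       cmp A x (jn A y z) = jn A (cmp A x y) (cmp A x z) \<and>
       cmp A (jn A x y) z = jn A (cmp A x z) (cmp A y z)) \<and>
    (\<forall>x\<in>car A. cmp A (un A) x = x \<and> cmp A x (un A) = x \<and>
       cmp A (bt A) x = bt A \<and> cmp A x (bt A) = bt A) \<and>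
    \<comment> \<open>converse\<close>
    (\<forall>x\<in>car A. cnv A (cnv A x) = x) \<and>
    (\<forall>x\<in>car A. \<forall>y\<in>car A. cnv A (cmp A x y) = cmp A (cnv A y) (cnv A x) \<and>
       cnv A (jn A x y) = jn A (cnv A x) (cnv A y)) \<and>
    \<comment> \<open>remaining axioms\<close>
    pcm A (pcm A (un A)) = un A \<and>
    (\<forall>x\<in>car A. \<forall>y\<in>car A. pcm A (pcm A (cmp A x y)) = cmp A (pcm A (pcm A x)) (pcm A (pcm A y))) \<and>
    (\<forall>x\<in>car A. \<forall>y\<in>car A. \<forall>z\<in>car A.
       le A (mt A (cmp A x y) z) (cmp A x (mt A y (cmp A (cnv A x) z))))"

definition fjoin :: "'a sra \<Rightarrow> 'a set \<Rightarrow> 'a" where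
  "fjoin A P = Finite_Set.fold (jn A) (bt A) P"

definition injective :: "'a sra \<Rightarrow> 'a \<Rightarrow> bool" where
  "injective A x \<longleftrightarrow> le A (cmp A x (cnv A x)) (un A)"
definition surjective :: "'a sra \<Rightarrow> 'a \<Rightarrow> bool" where
  "surjective A x \<longleftrightarrow> le A (un A) (cmp A (cnv A x) x)"
definition bijective :: "'a sra \<Rightarrow> 'a \<Rightarrow> bool" where
  "bijective A x \<longleftrightarrow> injective A x \<and> surjective A x"
definition vector :: "'a sra \<Rightarrow> 'a \<Rightarrow> bool" where
  "vector A x \<longleftrightarrow> cmp A x (tp A) = x"
definition covector :: "'a sra \<Rightarrow> 'a \<Rightarrow> bool" where
  "covector A x \<longleftrightarrow> cmp A (tp A) x = x"
definition point :: "'a sra \<Rightarrow> 'a \<Rightarrow> bool" where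
  "point A x \<longleftrightarrow> bijective A x \<and> vector A x"
definition ideal :: "'a sra \<Rightarrow> 'a \<Rightarrow> bool" where
  "ideal A x \<longleftrightarrow> vector A x \<and> covector A x"
definition ideal_point :: "'a sra \<Rightarrow> 'a \<Rightarrow> bool" where
  "ideal_point A p \<longleftrightarrow> point A p \<and>
     (\<forall>q\<in>car A. \<forall>x\<in>car A. point A q \<and> ideal A x \<and> x \<noteq> bt A \<and> le A (cmp A q x) p
        \<longrightarrow> le A q p)"

definition IPs :: "'a sra \<Rightarrow> 'a set" where
  "IPs A = {p \<in> car A. ideal_point A p}"
definition Is :: "'a sra \<Rightarrow> 'a set" where
  "Is A = {x \<in> car A. ideal A x}"

definition point_axiom :: "'a sra \<Rightarrow> bool" where
  "point_axiom A \<longleftrightarrow> finite (IPs A) \<and> IPs A \<noteq> {} \<and> tp A = fjoin A (IPs A)"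

definition Mat :: "'a sra \<Rightarrow> ('a \<times> 'a \<Rightarrow> 'a) sra" where
  "Mat S = (let P = IPs S \<times> IPs S in
    \<lparr> car = P \<rightarrow>\<^sub>E Is S,
      jn = (\<lambda>X Y. restrict (\<lambda>pq. jn S (X pq) (Y pq)) P),
      mt = (\<lambda>X Y. restrict (\<lambda>pq. mt S (X pq) (Y pq)) P),
      cmp = (\<lambda>X Y. restrict (\<lambda>(p,q). fjoin S ((\<lambda>r. mt S (X (p,r)) (Y (r,q))) ` IPs S)) P),
      pcm = (\<lambda>X. restrict (\<lambda>pq. pcm S (X pq)) P),
      cnv = (\<lambda>X. restrict (\<lambda>(p,q). X (q,p)) P),
      bt = restrict (\<lambda>pq. bt S) P,
      tp = restrict (\<lambda>pq. tp S) P,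
      un = restrict (\<lambda>(p,q). if p = q then tp S else bt S) P \<rparr>)"

definition sra_iso :: "'a sra \<Rightarrow> 'b sra \<Rightarrow> ('a \<Rightarrow> 'b) \<Rightarrow> bool" where
  "sra_iso A B h \<longleftrightarrow> bij_betw h (car A) (car B) \<and>
     (\<forall>x\<in>car A. \<forall>y\<in>car A.
        h (jn A x y) = jn B (h x) (h y) \<and> h (mt A x y) = mt B (h x) (h y) \<and>
        h (cmp A x y) = cmp B (h x) (h y)) \<and>
     (\<forall>x\<in>car A. h (pcm A x) = pcm B (h x) \<and> h (cnv A x) = cnv B (h x)) \<and>
     h (bt A) = bt B \<and> h (tp A) = tp B \<and> h (un A) = un B"

definition f_iso :: "'a sra \<Rightarrow> 'a \<Rightarrow> ('a \<times> 'a \<Rightarrow> 'a)" where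
  "f_iso S x = restrict (\<lambda>(p,q). cmp S (cmp S (cnv S p) x) q) (IPs S \<times> IPs S)"

definition g_iso :: "'a sra \<Rightarrow> ('a \<times> 'a \<Rightarrow> 'a) \<Rightarrow> 'a" where
  "g_iso S X = fjoin S ((\<lambda>(p,q). cmp S (cmp S p (X (p,q))) (cnv S q)) ` (IPs S \<times> IPs S))"

end

theory Submission
  imports Defs
begin


locale SR =
  fixes S :: "'a sra"
  assumes sra: "stone_ra S"
begin

abbreviation "K \<equiv> car S"
abbreviation "J \<equiv> jn S"
abbreviation "M \<equiv> mt S"
abbreviation "C \<equiv> cmp S"
abbreviation "N \<equiv> pcm S"
abbreviation "V \<equiv> cnv S"
abbreviation "B \<equiv> bt S"
abbreviation "T \<equiv> tp S"
abbreviation "U \<equiv> un S"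
abbreviation "L \<equiv> le S"

lemma b1: "B \<in> K \<and> T \<in> K \<and> U \<in> K"
  using sra unfolding stone_ra_def by blast
lemma b2: "\<forall>x\<in>K. \<forall>y\<in>K. J x y \<in> K \<and> M x y \<in> K \<and> C x y \<in> K"
  using sra unfolding stone_ra_def by (elim conjE) assumption
lemma b3: "\<forall>x\<in>K. N x \<in> K \<and> V x \<in> K"
  using sra unfolding stone_ra_def by (elim conjE) assumption
lemma b4: "\<forall>x\<in>K. \<forall>y\<in>K. \<forall>z\<in>K. J (J x y) z = J x (J y z) \<and> M (M x y) z = M x (M y z) \<and> M x (J y z) = J (M x y) (M x z)"
  using sra unfolding stone_ra_def by (elim conjE) assumption
lemma b5: "\<forall>x\<in>K. \<forall>y\<in>K. J x y = J y x \<and> M x y = M y x \<and> J x (M x y) = x \<and> M x (J x y) = x"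
  using sra unfolding stone_ra_def by (elim conjE) assumption
lemma b6: "\<forall>x\<in>K. J x x = x \<and> M x x = x \<and> J B x = x \<and> M T x = x"
  using sra unfolding stone_ra_def by (elim conjE) assumption
lemma b7: "\<forall>x\<in>K. \<forall>y\<in>K. M x y = B \<longleftrightarrow> L x (N y)"
  using sra unfolding stone_ra_def by (elim conjE) assumption
lemma b8: "\<forall>x\<in>K. J (N x) (N (N x)) = T"
  using sra unfolding stone_ra_def by (elim conjE) assumption
lemma b9: "\<forall>x\<in>K. \<forall>y\<in>K. \<forall>z\<in>K. C (C x y) z = C x (C y z) \<and> C x (J y z) = J (C x y) (C x z) \<and> C (J x y) z = J (C x z) (C y z)"
  using sra unfolding stone_ra_def by (elim conjE) assumption
lemma b10: "\<forall>x\<in>K. C U x = x \<and> C x U = x \<and> C B x = B \<and> C x B = B"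
  using sra unfolding stone_ra_def by (elim conjE) assumption
lemma b11: "\<forall>x\<in>K. V (V x) = x"
  using sra unfolding stone_ra_def by (elim conjE) assumption
lemma b12: "\<forall>x\<in>K. \<forall>y\<in>K. V (C x y) = C (V y) (V x) \<and> V (J x y) = J (V x) (V y)"
  using sra unfolding stone_ra_def by (elim conjE) assumption
lemma b13: "\<forall>x\<in>K. \<forall>y\<in>K. \<forall>z\<in>K. L (M (C x y) z) (C x (M y (C (V x) z)))"
  using sra unfolding stone_ra_def by (elim conjE) assumption
lemmas blocks = b1 b2 b3 b4 b5 b6 b7 b8 b9 b10 b11 b12 b13

lemma cl[simp]: "B \<in> K" "T \<in> K" "U \<in> K"
  "x \<in> K \<Longrightarrow> y \<in> K \<Longrightarrow> J x y \<in> K"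
  "x \<in> K \<Longrightarrow> y \<in> K \<Longrightarrow> M x y \<in> K"
  "x \<in> K \<Longrightarrow> y \<in> K \<Longrightarrow> C x y \<in> K"
  "x \<in> K \<Longrightarrow> N x \<in> K"
  "x \<in> K \<Longrightarrow> V x \<in> K"
  using blocks(1-3) by blast+

context fixes x y z assumes xyz: "x \<in> K" "y \<in> K" "z \<in> K" begin
lemma J_assoc: "J (J x y) z = J x (J y z)" using blocks(4) xyz by blast
lemma M_assoc: "M (M x y) z = M x (M y z)" using blocks(4) xyz by blast
lemma M_J_distr: "M x (J y z) = J (M x y) (M x z)" using blocks(4) xyz by blast
lemma C_assoc: "C (C x y) z = C x (C y z)" using blocks(9) xyz by blast
lemma C_J_distl: "C x (J y z) = J (C x y) (C x z)" using blocks(9) xyz by blast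
lemma C_J_distr: "C (J x y) z = J (C x z) (C y z)" using blocks(9) xyz by blast
lemma dedekind: "L (M (C x y) z) (C x (M y (C (V x) z)))" using blocks(13) xyz by blast
end
context fixes x y assumes xy: "x \<in> K" "y \<in> K" begin
lemma J_comm: "J x y = J y x" using blocks(5) xy by blast
lemma M_comm: "M x y = M y x" using blocks(5) xy by blast
lemma J_absorb: "J x (M x y) = x" using blocks(5) xy by blast
lemma M_absorb: "M x (J x y) = x" using blocks(5) xy by blast
lemma pcm_ax: "M x y = B \<longleftrightarrow> L x (N y)" using blocks(7) xy by blast
lemma V_C: "V (C x y) = C (V y) (V x)" using blocks(12) xy by blast
lemma V_J: "V (J x y) = J (V x) (V y)" using blocks(12) xy by blast
end
context fixes x assumes x: "x \<in> K" begin
lemma J_idem: "J x x = x" using blocks(6) x by blast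
lemma M_idem: "M x x = x" using blocks(6) x by blast
lemma J_B: "J B x = x" using blocks(6) x by blast
lemma M_T: "M T x = x" using blocks(6) x by blast
lemma stone: "J (N x) (N (N x)) = T" using blocks(8) x by blast
lemma C_U_l: "C U x = x" using blocks(10) x by blast
lemma C_U_r: "C x U = x" using blocks(10) x by blast
lemma C_B_l: "C B x = B" using blocks(10) x by blast
lemma C_B_r: "C x B = B" using blocks(10) x by blast
lemma V_V: "V (V x) = x" using blocks(11) x by blast
end

lemmas [simp] = J_idem M_idem J_B M_T C_U_l C_U_r C_B_l C_B_r V_V

lemma J_B_r[simp]: "x \<in> K \<Longrightarrow> J x B = x" by (metis J_B J_comm cl(1))
lemma M_T_r[simp]: "x \<in> K \<Longrightarrow> M x T = x" by (metis M_T M_comm cl(2))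

lemma L_def2: "L x y \<longleftrightarrow> J x y = y" by (simp add: le_def)

lemma L_M: "x \<in> K \<Longrightarrow> y \<in> K \<Longrightarrow> L x y \<longleftrightarrow> M x y = x"
  by (metis L_def2 M_absorb J_absorb J_comm M_comm)

lemma L_refl[simp]: "x \<in> K \<Longrightarrow> L x x" by (simp add: L_def2)
lemma L_antisym: "x \<in> K \<Longrightarrow> y \<in> K \<Longrightarrow> L x y \<Longrightarrow> L y x \<Longrightarrow> x = y"
  by (metis L_def2 J_comm)
lemma L_trans: "x \<in> K \<Longrightarrow> y \<in> K \<Longrightarrow> z \<in> K \<Longrightarrow> L x y \<Longrightarrow> L y z \<Longrightarrow> L x z"
  by (metis L_def2 J_assoc)
lemma L_J1[simp]: "x \<in> K \<Longrightarrow> y \<in> K \<Longrightarrow> L x (J x y)"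
  by (metis L_def2 J_assoc J_idem)
lemma L_J2[simp]: "x \<in> K \<Longrightarrow> y \<in> K \<Longrightarrow> L y (J x y)"
  by (metis L_J1 J_comm)
lemma L_J_iff[simp]: "x \<in> K \<Longrightarrow> y \<in> K \<Longrightarrow> z \<in> K \<Longrightarrow> L (J x y) z \<longleftrightarrow> L x z \<and> L y z"
  by (metis L_def2 J_assoc L_J1 L_J2 L_trans cl(4))
lemma L_M1[simp]: "x \<in> K \<Longrightarrow> y \<in> K \<Longrightarrow> L (M x y) x"
  by (metis L_M M_assoc M_comm M_idem cl(5))
lemma L_M2[simp]: "x \<in> K \<Longrightarrow> y \<in> K \<Longrightarrow> L (M x y) y"
  by (metis L_M1 M_comm)
lemma L_M_iff[simp]: "x \<in> K \<Longrightarrow> y \<in> K \<Longrightarrow> z \<in> K \<Longrightarrow> L z (M x y) \<longleftrightarrow> L z x \<and> L z y"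
  by (metis L_M M_assoc L_M1 L_M2 L_trans cl(5))
lemma L_B[simp]: "x \<in> K \<Longrightarrow> L B x" by (simp add: L_def2)
lemma L_T[simp]: "x \<in> K \<Longrightarrow> L x T" by (metis L_M M_T M_comm cl(2))
lemma L_B_iff[simp]: "x \<in> K \<Longrightarrow> L x B \<longleftrightarrow> x = B" by (metis L_antisym L_B cl(1) L_refl)

lemma C_mono_r: "x \<in> K \<Longrightarrow> y \<in> K \<Longrightarrow> z \<in> K \<Longrightarrow> L y z \<Longrightarrow> L (C x y) (C x z)"
  by (metis L_def2 C_J_distl)
lemma C_mono_l: "x \<in> K \<Longrightarrow> y \<in> K \<Longrightarrow> z \<in> K \<Longrightarrow> L x y \<Longrightarrow> L (C x z) (C y z)"
  by (metis L_def2 C_J_distr)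
lemma C_mono: "x \<in> K \<Longrightarrow> y \<in> K \<Longrightarrow> x' \<in> K \<Longrightarrow> y' \<in> K \<Longrightarrow> L x x' \<Longrightarrow> L y y' \<Longrightarrow> L (C x y) (C x' y')"
  by (meson C_mono_l C_mono_r L_trans cl(6))
lemma V_mono: "x \<in> K \<Longrightarrow> y \<in> K \<Longrightarrow> L x y \<Longrightarrow> L (V x) (V y)"
  by (metis L_def2 V_J)
lemma V_mono_iff[simp]: "x \<in> K \<Longrightarrow> y \<in> K \<Longrightarrow> L (V x) (V y) \<longleftrightarrow> L x y"
  by (metis V_mono V_V cl(8))
lemma M_mono: "x \<in> K \<Longrightarrow> y \<in> K \<Longrightarrow> x' \<in> K \<Longrightarrow> y' \<in> K \<Longrightarrow> L x x' \<Longrightarrow> L y y' \<Longrightarrow> L (M x y) (M x' y')"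
  by (meson L_M1 L_M2 L_M_iff L_trans cl(5))

lemma V_U[simp]: "V U = U" by (metis C_U_l V_C V_V cl(3) cl(8))
lemma V_T[simp]: "V T = T" by (metis L_T L_antisym V_V V_mono cl(2) cl(8))
lemma V_B[simp]: "V B = B" by (metis L_B L_antisym V_V V_mono cl(1) cl(8))
lemma V_M: "x \<in> K \<Longrightarrow> y \<in> K \<Longrightarrow> V (M x y) = M (V x) (V y)"
  by (smt (verit) L_M1 L_M2 L_M_iff L_antisym V_V V_mono_iff cl(5) cl(8))


end


context SR begin
lemma x_le_xxx: "x \<in> K \<Longrightarrow> L x (C (C x (V x)) x)"
proof -
  assume x: "x \<in> K"
  have "L (M (C x U) x) (C x (M U (C (V x) x)))" using dedekind[of x U x] x by simp
  hence "L x (C x (M U (C (V x) x)))" using x by simp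
  moreover have "L (C x (M U (C (V x) x))) (C x (C (V x) x))" using x by (simp add: C_mono_r)
  ultimately show ?thesis using x L_trans[of x "C x (M U (C (V x) x))" "C x (C (V x) x)"] by (simp add: C_assoc)
qed

lemma inj_distl:
  assumes p: "p \<in> K" and y: "y \<in> K" and z: "z \<in> K" and inj: "L (C p (V p)) U"
  shows "C (V p) (M y z) = M (C (V p) y) (C (V p) z)"
proof (rule L_antisym)
  show "L (C (V p) (M y z)) (M (C (V p) y) (C (V p) z))"
    using p y z by (simp add: C_mono_r)
  have 1: "L (M (C (V p) y) (C (V p) z)) (C (V p) (M y (C p (C (V p) z))))"
    using dedekind[of "V p" y "C (V p) z"] p y z by simp
  have "L (C (C p (V p)) z) (C U z)" using inj p z by (intro C_mono_l) simp_all
  hence "L (C p (C (V p) z)) z" using p z by (simp add: C_assoc)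
  hence "L (C (V p) (M y (C p (C (V p) z)))) (C (V p) (M y z))"
    using p y z by (intro C_mono_r M_mono) simp_all
  thus "L (M (C (V p) y) (C (V p) z)) (C (V p) (M y z))"
    using 1 p y z L_trans[of "M (C (V p) y) (C (V p) z)" "C (V p) (M y (C p (C (V p) z)))" "C (V p) (M y z)"] by simp
qed (use p y z in simp_all)

lemma inj_distr:
  assumes p: "p \<in> K" and y: "y \<in> K" and z: "z \<in> K" and inj: "L (C p (V p)) U"
  shows "C (M y z) p = M (C y p) (C z p)"
proof -
  have "V (C (M y z) p) = C (V p) (M (V y) (V z))" using p y z by (simp add: V_C V_M)
  also have "\<dots> = M (C (V p) (V y)) (C (V p) (V z))" using inj_distl p y z inj by simp
  also have "\<dots> = V (M (C y p) (C z p))" using p y z by (simp add: V_C V_M)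
  finally have "V (V (C (M y z) p)) = V (V (M (C y p) (C z p)))" by simp
  thus ?thesis using p y z by simp
qed

definition g0 :: "'a \<Rightarrow> 'a \<Rightarrow> 'a" where "g0 a b = (if b \<in> K then J a b else b)"

lemma g0_idem: "comp_fun_idem_on K g0"
proof
  fix x y assume x: "x \<in> K" and y: "y \<in> K"
  show "g0 y \<circ> g0 x = g0 x \<circ> g0 y"
  proof
    fix b show "(g0 y \<circ> g0 x) b = (g0 x \<circ> g0 y) b"
      using x y by (cases "b \<in> K") (simp_all add: g0_def J_assoc[symmetric] J_comm[of x y])
  qed
  show "g0 x \<circ> g0 x = g0 x"
  proof
    fix b show "(g0 x \<circ> g0 x) b = g0 x b"
      using x by (cases "b \<in> K") (simp_all add: g0_def J_assoc[symmetric])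
  qed
qed

interpretation gi: comp_fun_idem_on K g0 by (rule g0_idem)

lemma fold_g0_cl: "finite P \<Longrightarrow> P \<subseteq> K \<Longrightarrow> Finite_Set.fold g0 B P \<in> K"
proof (induction P rule: finite_induct)
  case empty then show ?case by simp
next
  case (insert x F) then show ?case by (simp add: gi.fold_insert_idem) (simp add: g0_def)
qed

lemma fjoin_g0: "P \<subseteq> K \<Longrightarrow> fjoin S P = Finite_Set.fold g0 B P"
  unfolding fjoin_def by (rule fold_closed_eq[where B=K]) (auto simp: g0_def)

lemma fj_cl[simp]: "finite P \<Longrightarrow> P \<subseteq> K \<Longrightarrow> fjoin S P \<in> K"
  by (simp add: fjoin_g0 fold_g0_cl)

lemma fj_empty[simp]: "fjoin S {} = B" by (simp add: fjoin_def)

lemma fj_insert: "finite P \<Longrightarrow> P \<subseteq> K \<Longrightarrow> a \<in> K \<Longrightarrow> fjoin S (insert a P) = J a (fjoin S P)"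
  by (simp add: fjoin_g0 gi.fold_insert_idem fold_g0_cl) (simp add: g0_def fold_g0_cl)

lemma fj_ub: "finite P \<Longrightarrow> P \<subseteq> K \<Longrightarrow> p \<in> P \<Longrightarrow> L p (fjoin S P)"
proof (induction P rule: finite_induct)
  case empty then show ?case by simp
next
  case (insert x F) then show ?case by (auto simp: fj_insert intro: L_trans[OF _ _ _ _ L_J2])
qed

lemma fj_lub: "finite P \<Longrightarrow> P \<subseteq> K \<Longrightarrow> u \<in> K \<Longrightarrow> (\<And>p. p \<in> P \<Longrightarrow> L p u) \<Longrightarrow> L (fjoin S P) u"
proof (induction P rule: finite_induct)
  case empty then show ?case by simp
next
  case (insert x F) then show ?case by (simp add: fj_insert)
qed

lemma fj_hom:
  assumes "finite P" "P \<subseteq> K" and hK: "\<And>x. x \<in> K \<Longrightarrow> h x \<in> K"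
    and hJ: "\<And>x y. x \<in> K \<Longrightarrow> y \<in> K \<Longrightarrow> h (J x y) = J (h x) (h y)" and hB: "h B = B"
  shows "h (fjoin S P) = fjoin S (h ` P)"
  using assms(1,2)
proof (induction P rule: finite_induct)
  case empty then show ?case by (simp add: hB)
next
  case (insert x F)
  have "h ` F \<subseteq> K" using insert hK by auto
  then show ?case using insert by (simp add: fj_insert hJ hK)
qed


lemma ideal_CM: assumes a: "a \<in> K" and b: "b \<in> K" and ia: "ideal S a" and ib: "ideal S b"
  shows "C a b = M a b"
proof (rule L_antisym)
  have av: "C a T = a" and bc: "C T b = b" using ia ib by (simp_all add: ideal_def vector_def covector_def)
  have "L (C a b) (C a T)" using a b by (intro C_mono_r) simp_all
  moreover have "L (C a b) (C T b)" using a b by (intro C_mono_l) simp_all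
  ultimately show "L (C a b) (M a b)" using a b av bc by simp
  have "L (M (C a T) b) (C a (M T (C (V a) b)))" using dedekind[of a T b] a b by simp
  hence 1: "L (M a b) (C a (C (V a) b))" using av a b by simp
  have "L (C a (C (V a) b)) (C a (C T b))" using a b by (intro C_mono_r C_mono_l) simp_all
  thus "L (M a b) (C a b)" using 1 bc a b L_trans[of "M a b" "C a (C (V a) b)" "C a b"] by simp
qed (use a b in simp_all)

lemma ideal_V_ideal: assumes a: "a \<in> K" and ia: "ideal S a" shows "ideal S (V a)"
proof -
  have av: "C a T = a" and ac: "C T a = a" using ia by (simp_all add: ideal_def vector_def covector_def)
  have "C (V a) T = V a" using ac a V_C[of T a] by simp
  moreover have "C T (V a) = V a" using av a V_C[of a T] by simp
  ultimately show ?thesis by (simp add: ideal_def vector_def covector_def)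
qed

lemma ideal_le_V: assumes a: "a \<in> K" and ia: "ideal S a" shows "L a (V a)"
proof -
  have av: "C a T = a" and ac: "C T a = a" using ia by (simp_all add: ideal_def vector_def covector_def)
  have iv: "C (V a) T = V a" "C T (V a) = V a" using ideal_V_ideal[OF a ia] by (simp_all add: ideal_def vector_def covector_def)
  have 1: "L a (C (C a (V a)) a)" using x_le_xxx a by simp
  have "L (C (C a (V a)) a) (C (C T (V a)) T)" using a by (intro C_mono C_mono_l) simp_all
  hence "L (C (C a (V a)) a) (V a)" using iv by simp
  thus ?thesis using 1 a L_trans[of a "C (C a (V a)) a" "V a"] by simp
qed

lemma ideal_V: assumes a: "a \<in> K" and ia: "ideal S a" shows "V a = a"
proof (rule L_antisym)
  show "L a (V a)" by (rule ideal_le_V[OF a ia])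
  have "L (V a) (V (V a))" by (rule ideal_le_V) (use a ideal_V_ideal[OF a ia] in simp_all)
  thus "L (V a) a" using a by simp
qed (use a in simp_all)

lemma point_props: assumes "point S p"
  shows "L (C p (V p)) U" "L U (C (V p) p)" "C p T = p"
  using assms by (simp_all add: point_def bijective_def injective_def surjective_def vector_def)

lemma pt_VpP: assumes p: "p \<in> K" "point S p" shows "C (V p) p = T"
proof (rule L_antisym)
  have "L (C U T) (C (C (V p) p) T)" using point_props[OF p(2)] p by (intro C_mono_l) simp_all
  thus "L T (C (V p) p)" using p point_props[OF p(2)] by (simp add: C_assoc)
qed (use p in simp_all)

lemma pt_VpT: assumes p: "p \<in> K" "point S p" shows "C (V p) T = T"
proof (rule L_antisym)
  have "L (C (V p) p) (C (V p) T)" using p by (intro C_mono_r) simp_all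
  thus "L T (C (V p) T)" using pt_VpP[OF p] by simp
qed (use p in simp_all)

lemma pt_Tp: assumes p: "p \<in> K" "point S p" shows "C T p = T"
proof (rule L_antisym)
  have "L (C (V p) p) (C T p)" using p by (intro C_mono_l) simp_all
  thus "L T (C T p)" using pt_VpP[OF p] by simp
qed (use p in simp_all)

lemma pt_TVp: assumes p: "p \<in> K" "point S p" shows "C T (V p) = V p"
  using V_C[of p T] p point_props[OF p(2)] by simp

lemma pxq_ideal: assumes p: "p \<in> K" "point S p" and q: "q \<in> K" "point S q" and x: "x \<in> K"
  shows "ideal S (C (C (V p) x) q)"
  unfolding ideal_def vector_def covector_def
proof
  show "C (C (C (V p) x) q) T = C (C (V p) x) q" using p q x point_props[OF q(2)] by (simp add: C_assoc)
  show "C T (C (C (V p) x) q) = C (C (V p) x) q" using p q x pt_TVp[OF p] by (simp add: C_assoc[symmetric])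
qed

lemma ip_rule: "ideal_point S q \<Longrightarrow> r \<in> K \<Longrightarrow> x \<in> K \<Longrightarrow> point S r \<Longrightarrow> ideal S x \<Longrightarrow> x \<noteq> B \<Longrightarrow> L (C r x) q \<Longrightarrow> L r q"
  unfolding ideal_point_def by blast

lemma IPs_K: "p \<in> IPs S \<Longrightarrow> p \<in> K" by (simp add: IPs_def)
lemma IPs_point: "p \<in> IPs S \<Longrightarrow> point S p" by (simp add: IPs_def ideal_point_def)

lemma distinct_ip: assumes p: "p \<in> IPs S" and q: "q \<in> IPs S" and pq: "p \<noteq> q"
  shows "C (V p) q = B"
proof (rule ccontr)
  assume nz: "C (V p) q \<noteq> B"
  define x where "x = C (V p) q"
  have pK: "p \<in> K" and qK: "q \<in> K" and pp: "point S p" and qp: "point S q"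
    using p q by (simp_all add: IPs_K IPs_point)
  have xK: "x \<in> K" using pK qK x_def by simp
  have ix: "ideal S x" using pxq_ideal[OF pK pp qK qp, of U] pK qK by (simp add: x_def)
  have vx: "V x = C (V q) p" using pK qK V_C[of "V p" q] by (simp add: x_def)
  have vnz: "V x \<noteq> B" using nz ideal_V[OF xK ix] x_def by simp
  have ivx: "ideal S (V x)" using ideal_V_ideal[OF xK ix] .
  have "L (C (C p (V p)) q) (C U q)" using point_props[OF pp] pK qK by (intro C_mono_l) simp_all
  hence 1: "L (C p x) q" using pK qK by (simp add: x_def C_assoc)
  have "L (C (C q (V q)) p) (C U p)" using point_props[OF qp] pK qK by (intro C_mono_l) simp_all
  hence 2: "L (C q (V x)) p" using pK qK by (simp add: vx C_assoc)
  have "L p q" using ip_rule[OF _ pK xK pp ix] q 1 nz unfolding IPs_def x_def by blast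
  moreover have "L q p" using ip_rule[OF _ qK _ qp ivx] p 2 vnz xK unfolding IPs_def by simp
  ultimately show False using pq pK qK L_antisym[of p q] by simp
qed

end



lemma ball_img: "(\<forall>x\<in>h ` A. P x) \<longleftrightarrow> (\<forall>x\<in>A. P (h x))" by blast

lemma iso_transfer:
  assumes sA: "stone_ra A" and iso: "sra_iso A B h"
  shows "stone_ra B"
proof -
  have bij: "bij_betw h (car A) (car B)" using iso by (simp add: sra_iso_def)
  have cB: "car B = h ` car A" using bij by (simp add: bij_betw_def)
  have inj: "\<And>x y. x \<in> car A \<Longrightarrow> y \<in> car A \<Longrightarrow> h x = h y \<longleftrightarrow> x = y"
    using bij by (auto simp: bij_betw_def inj_on_def)
  have hom: "\<And>x y. x \<in> car A \<Longrightarrow> y \<in> car A \<Longrightarrow> jn B (h x) (h y) = h (jn A x y) \<and>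
      mt B (h x) (h y) = h (mt A x y) \<and> cmp B (h x) (h y) = h (cmp A x y)"
    and hom1: "\<And>x. x \<in> car A \<Longrightarrow> pcm B (h x) = h (pcm A x) \<and> cnv B (h x) = h (cnv A x)"
    and hc: "bt B = h (bt A)" "tp B = h (tp A)" "un B = h (un A)"
    using iso by (simp_all add: sra_iso_def)
  have c00: "bt A \<in> car A \<and> tp A \<in> car A \<and> un A \<in> car A"
    using sA unfolding stone_ra_def by blast
  have c01: "\<forall>x\<in>car A. \<forall>y\<in>car A. jn A x y \<in> car A \<and> mt A x y \<in> car A \<and> cmp A x y \<in> car A"
    using sA unfolding stone_ra_def by (elim conjE) assumption
  have c02: "\<forall>x\<in>car A. pcm A x \<in> car A \<and> cnv A x \<in> car A"
    using sA unfolding stone_ra_def by (elim conjE) assumption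
  note c0 = c00 c01 c02
  have clA: "bt A \<in> car A" "tp A \<in> car A" "un A \<in> car A"
    "\<And>x y. x \<in> car A \<Longrightarrow> y \<in> car A \<Longrightarrow> jn A x y \<in> car A"
    "\<And>x y. x \<in> car A \<Longrightarrow> y \<in> car A \<Longrightarrow> mt A x y \<in> car A"
    "\<And>x y. x \<in> car A \<Longrightarrow> y \<in> car A \<Longrightarrow> cmp A x y \<in> car A"
    "\<And>x. x \<in> car A \<Longrightarrow> pcm A x \<in> car A"
    "\<And>x. x \<in> car A \<Longrightarrow> cnv A x \<in> car A"
    using c0 by blast+
  have leB: "\<And>x y. x \<in> car A \<Longrightarrow> y \<in> car A \<Longrightarrow> le B (h x) (h y) \<longleftrightarrow> le A x y"
    unfolding le_def using hom inj clA by simp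
  have hom': "\<And>x y. x \<in> car A \<Longrightarrow> y \<in> car A \<Longrightarrow> jn B (h x) (h y) = h (jn A x y)"
      "\<And>x y. x \<in> car A \<Longrightarrow> y \<in> car A \<Longrightarrow> mt B (h x) (h y) = h (mt A x y)"
      "\<And>x y. x \<in> car A \<Longrightarrow> y \<in> car A \<Longrightarrow> cmp B (h x) (h y) = h (cmp A x y)"
      "\<And>x. x \<in> car A \<Longrightarrow> pcm B (h x) = h (pcm A x)"
      "\<And>x. x \<in> car A \<Longrightarrow> cnv B (h x) = h (cnv A x)"
    using hom hom1 by simp_all
  show ?thesis
    unfolding stone_ra_def
    apply (simp only: cB ball_img hc)
    apply (simp only: Ball_def)
    apply (simp only: hom' clA inj leB cong: imp_cong)
    apply (intro conjI)
    apply (insert sA[unfolded stone_ra_def Ball_def])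
    apply ((elim conjE, assumption) | (intro allI impI conjI imageI clA; assumption))+
    done
qed


lemma iso_inverse:
  assumes sA: "stone_ra A" and iso: "sra_iso A B h"
    and gh: "\<And>x. x \<in> car A \<Longrightarrow> g (h x) = x"
    and gB: "\<And>X. X \<in> car B \<Longrightarrow> g X \<in> car A"
    and hg: "\<And>X. X \<in> car B \<Longrightarrow> h (g X) = X"
  shows "sra_iso B A g"
proof -
  have bij: "bij_betw h (car A) (car B)" using iso by (simp add: sra_iso_def)
  have hA: "\<And>x. x \<in> car A \<Longrightarrow> h x \<in> car B" using bij by (auto simp: bij_betw_def)
  have hom: "\<And>x y. x \<in> car A \<Longrightarrow> y \<in> car A \<Longrightarrow> jn B (h x) (h y) = h (jn A x y) \<and>
      mt B (h x) (h y) = h (mt A x y) \<and> cmp B (h x) (h y) = h (cmp A x y)"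
    and hom1: "\<And>x. x \<in> car A \<Longrightarrow> pcm B (h x) = h (pcm A x) \<and> cnv B (h x) = h (cnv A x)"
    and hc: "bt B = h (bt A)" "tp B = h (tp A)" "un B = h (un A)"
    using iso by (simp_all add: sra_iso_def)
  have c00: "bt A \<in> car A \<and> tp A \<in> car A \<and> un A \<in> car A"
    using sA unfolding stone_ra_def by blast
  have c01: "\<forall>x\<in>car A. \<forall>y\<in>car A. jn A x y \<in> car A \<and> mt A x y \<in> car A \<and> cmp A x y \<in> car A"
    using sA unfolding stone_ra_def by (elim conjE) assumption
  have c02: "\<forall>x\<in>car A. pcm A x \<in> car A \<and> cnv A x \<in> car A"
    using sA unfolding stone_ra_def by (elim conjE) assumption
  have bg: "bij_betw g (car B) (car A)"
    by (rule bij_betwI[where g=h]) (auto simp: gB hA gh hg)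
  have "\<forall>X\<in>car B. \<forall>Y\<in>car B.
        g (jn B X Y) = jn A (g X) (g Y) \<and> g (mt B X Y) = mt A (g X) (g Y) \<and>
        g (cmp B X Y) = cmp A (g X) (g Y)"
  proof (intro ballI)
    fix X Y assume X: "X \<in> car B" and Y: "Y \<in> car B"
    obtain x y where x: "x \<in> car A" "X = h x" and y: "y \<in> car A" "Y = h y"
      using X Y bij unfolding bij_betw_def by blast
    show "g (jn B X Y) = jn A (g X) (g Y) \<and> g (mt B X Y) = mt A (g X) (g Y) \<and>
        g (cmp B X Y) = cmp A (g X) (g Y)"
      using x y hom c01 gh by simp
  qed
  moreover have "\<forall>X\<in>car B. g (pcm B X) = pcm A (g X) \<and> g (cnv B X) = cnv A (g X)"
  proof (intro ballI)
    fix X assume X: "X \<in> car B"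
    obtain x where x: "x \<in> car A" "X = h x"
      using X bij unfolding bij_betw_def by blast
    show "g (pcm B X) = pcm A (g X) \<and> g (cnv B X) = cnv A (g X)"
      using x hom1 c02 gh by simp
  qed
  ultimately show ?thesis using bg c00 gh hc unfolding sra_iso_def by simp
qed




context SR begin

lemma M_B[simp]: "x \<in> K \<Longrightarrow> M x B = B" using L_M[of B x] M_comm[of B x] by simp
lemma M_B_l[simp]: "x \<in> K \<Longrightarrow> M B x = B" using L_M[of B x] by simp

lemma fj_le_hom:
  assumes "finite P" "P \<subseteq> K" and hK: "\<And>x. x \<in> K \<Longrightarrow> h x \<in> K"
    and hJ: "\<And>x y. x \<in> K \<Longrightarrow> y \<in> K \<Longrightarrow> h (J x y) = J (h x) (h y)" and hB: "h B = B"
    and u: "u \<in> K" and le: "\<And>p. p \<in> P \<Longrightarrow> L (h p) u"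
  shows "L (h (fjoin S P)) u"
proof -
  have "h (fjoin S P) = fjoin S (h ` P)" by (rule fj_hom) (use assms in auto)
  moreover have "L (fjoin S (h ` P)) u" by (rule fj_lub) (use assms in auto)
  ultimately show ?thesis by simp
qed

lemma fj_le_C:
  assumes "finite P" "P \<subseteq> K" "a \<in> K" "b \<in> K" "u \<in> K"
    and le: "\<And>p. p \<in> P \<Longrightarrow> L (C (C a p) b) u"
  shows "L (C (C a (fjoin S P)) b) u"
  by (rule fj_le_hom[where h="\<lambda>y. C (C a y) b"]) (use assms in \<open>simp_all add: C_J_distl C_J_distr\<close>)

lemma M_fj:
  assumes "finite P" "P \<subseteq> K" "a \<in> K"
  shows "M a (fjoin S P) = fjoin S (M a ` P)"
  by (rule fj_hom[where h="M a"]) (use assms in \<open>simp_all add: M_J_distr\<close>)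

end

locale SRP = SR +
  assumes pax: "point_axiom S"
begin

abbreviation "IP \<equiv> IPs S"

lemma IP_fin[simp]: "finite IP" and IP_ne: "IP \<noteq> {}" and T_IP: "T = fjoin S IP"
  using pax by (simp_all add: point_axiom_def)

lemma IP_K[simp]: "IP \<subseteq> K" by (auto simp: IPs_def)
declare IPs_K[simp]

lemma sum_rr: "fjoin S ((\<lambda>r. C r (V r)) ` IP) = U"
proof (rule L_antisym)
  have RK: "(\<lambda>r. C r (V r)) ` IP \<subseteq> K" using IP_K by auto
  show "L (fjoin S ((\<lambda>r. C r (V r)) ` IP)) U"
    by (rule fj_lub) (use RK point_props IPs_point in auto)
  have "U = M U T" by simp
  also have "\<dots> = fjoin S (M U ` IP)" using M_fj[of IP U] T_IP by simp
  finally have eq: "U = fjoin S (M U ` IP)" .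
  have "L (fjoin S (M U ` IP)) (fjoin S ((\<lambda>r. C r (V r)) ` IP))"
  proof (rule fj_lub)
    show "finite (M U ` IP)" "M U ` IP \<subseteq> K" using IP_K by auto
    show "fjoin S ((\<lambda>r. C r (V r)) ` IP) \<in> K" using RK by simp
    fix t assume "t \<in> M U ` IP"
    then obtain r where r: "r \<in> IP" and t: "t = M U r" by blast
    have rK: "r \<in> K" using r IP_K by blast
    have rv: "C r T = r" using point_props IPs_point r by blast
    have "L (M (C r T) U) (C r (M T (C (V r) U)))" using dedekind[of r T U] rK by simp
    hence 1: "L t (C r (V r))" using rv rK t M_comm[of U r] by simp
    have 2: "L (C r (V r)) (fjoin S ((\<lambda>r. C r (V r)) ` IP))" by (rule fj_ub) (use RK r in auto)
    show "L t (fjoin S ((\<lambda>r. C r (V r)) ` IP))"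
      using L_trans[OF _ _ _ 1 2] rK RK t by simp
  qed
  thus "L U (fjoin S ((\<lambda>r. C r (V r)) ` IP))" using eq by simp
qed (use IP_K in \<open>auto intro!: fj_cl\<close>)


abbreviation "f \<equiv> f_iso S"
abbreviation "g \<equiv> g_iso S"

lemma Mat_car: "car (Mat S) = IP \<times> IP \<rightarrow>\<^sub>E Is S" by (simp add: Mat_def Let_def)

lemma f_app[simp]: "p \<in> IP \<Longrightarrow> q \<in> IP \<Longrightarrow> f x (p,q) = C (C (V p) x) q"
  by (simp add: f_iso_def)

lemma ip_pt[simp]: "p \<in> IP \<Longrightarrow> point S p" by (rule IPs_point)

lemma pxq_Is: "p \<in> IP \<Longrightarrow> q \<in> IP \<Longrightarrow> x \<in> K \<Longrightarrow> C (C (V p) x) q \<in> Is S"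
  using pxq_ideal[of p q x] by (simp add: Is_def)

lemma f_in: "x \<in> K \<Longrightarrow> f x \<in> car (Mat S)"
  unfolding Mat_car f_iso_def restrict_PiE_iff using pxq_Is by auto

lemma Is_K: "a \<in> Is S \<Longrightarrow> a \<in> K" and Is_ideal: "a \<in> Is S \<Longrightarrow> ideal S a" by (simp_all add: Is_def)

lemma X_Is: "X \<in> car (Mat S) \<Longrightarrow> p \<in> IP \<Longrightarrow> q \<in> IP \<Longrightarrow> X (p,q) \<in> Is S"
  unfolding Mat_car using PiE_mem by fastforce

lemma X_K[simp]: "X \<in> car (Mat S) \<Longrightarrow> p \<in> IP \<Longrightarrow> q \<in> IP \<Longrightarrow> X (p,q) \<in> K"
  using X_Is Is_K by blast

lemma ideal_TxT: "a \<in> K \<Longrightarrow> ideal S a \<Longrightarrow> C (C T a) T = a"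
  by (simp add: ideal_def vector_def covector_def)

definition GT :: "('a \<times> 'a \<Rightarrow> 'a) \<Rightarrow> 'a set" where
  "GT X = (\<lambda>(p,q). C (C p (X (p,q))) (V q)) ` (IP \<times> IP)"

lemma g_GT: "g X = fjoin S (GT X)" by (simp add: g_iso_def GT_def)

lemma GT_fin[simp]: "finite (GT X)" by (simp add: GT_def)
lemma GT_K[simp]: "X \<in> car (Mat S) \<Longrightarrow> GT X \<subseteq> K" by (auto simp: GT_def)

lemma g_in: "X \<in> car (Mat S) \<Longrightarrow> g X \<in> K" by (simp add: g_GT)

lemma GT_f: "x \<in> K \<Longrightarrow> GT (f x) = (\<lambda>(p,q). C (C p (C (C (V p) x) q)) (V q)) ` (IP \<times> IP)"
  unfolding GT_def by (rule image_cong) auto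

abbreviation "R \<equiv> (\<lambda>r. C r (V r)) ` IP"

lemma R_K[simp]: "R \<subseteq> K" by auto
lemma R_fin[simp]: "finite R" by simp

lemma gf: assumes x: "x \<in> K" shows "g (f x) = x"
proof (rule L_antisym)
  have fK: "f x \<in> car (Mat S)" using f_in x by simp
  show "L (g (f x)) x" unfolding g_GT
  proof (rule fj_lub)
    fix t assume "t \<in> GT (f x)"
    then obtain p q where p: "p \<in> IP" and q: "q \<in> IP" and t: "t = C (C p (C (C (V p) x) q)) (V q)"
      using GT_f x by auto
    have "L (C (C (C p (V p)) x) (C q (V q))) (C (C U x) U)"
      using p q x point_props(1)[OF ip_pt[OF p]] point_props(1)[OF ip_pt[OF q]]
      by (intro C_mono C_mono_l) simp_all
    thus "L t x" using t x p q by (simp add: C_assoc)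
  qed (use fK x in simp_all)
  have J: "g (f x) \<in> K" using g_in fK by simp
  have inner: "L (C (C t x) (fjoin S R)) (g (f x))" if t: "t \<in> R" for t
  proof -
    obtain p where p: "p \<in> IP" and tp: "t = C p (V p)" using t by blast
    have "L (C (C (C t x) (fjoin S R)) U) (g (f x))"
    proof (rule fj_le_C)
      fix s assume "s \<in> R"
      then obtain q where q: "q \<in> IP" and sq: "s = C q (V q)" by blast
      have "C (C p (C (C (V p) x) q)) (V q) \<in> GT (f x)" using GT_f x p q by auto
      hence "L (C (C p (C (C (V p) x) q)) (V q)) (g (f x))"
        unfolding g_GT using fj_ub[of "GT (f x)"] fK by simp
      thus "L (C (C (C t x) s) U) (g (f x))" using tp sq p q x by (simp add: C_assoc)
    qed (use t x J in auto)
    thus ?thesis using t x by auto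
  qed
  have "L (C (C U (fjoin S R)) (C x (fjoin S R))) (g (f x))"
  proof (rule fj_le_C)
    fix t assume t: "t \<in> R"
    have "C t (C x (fjoin S R)) = C (C t x) (fjoin S R)" using t x by (auto simp: C_assoc)
    thus "L (C (C U t) (C x (fjoin S R))) (g (f x))" using inner[OF t] t x by auto
  qed (use x J in auto)
  thus "L x (g (f x))" using sum_rr x by simp
qed (use x f_in g_in in auto)


lemma fg_pt: assumes X: "X \<in> car (Mat S)" and p: "p \<in> IP" and q: "q \<in> IP"
  shows "C (C (V p) (g X)) q = X (p,q)"
proof (rule L_antisym)
  have pK: "p \<in> K" and qK: "q \<in> K" using p q by simp_all
  have Xi: "ideal S (X (p,q))" using X_Is[OF X p q] Is_ideal by blast
  have XK: "X (p,q) \<in> K" using X p q by simp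
  have diag: "C (C (V p) (C (C p (X (p,q))) (V q))) q = X (p,q)"
  proof -
    have "C (C (V p) (C (C p (X (p,q))) (V q))) q = C (C (C (V p) p) (X (p,q))) (C (V q) q)"
      using pK qK XK by (simp add: C_assoc)
    also have "\<dots> = X (p,q)" using pt_VpP[of p] pt_VpP[of q] pK qK p q ideal_TxT[OF XK Xi] by simp
    finally show ?thesis .
  qed
  show "L (C (C (V p) (g X)) q) (X (p,q))" unfolding g_GT
  proof (rule fj_le_C)
    fix e assume "e \<in> GT X"
    then obtain r s where r: "r \<in> IP" and s: "s \<in> IP" and e: "e = C (C r (X (r,s))) (V s)"
      unfolding GT_def by auto
    have rsK: "X (r,s) \<in> K" using X r s by simp
    show "L (C (C (V p) e) q) (X (p,q))"
    proof (cases "r = p \<and> s = q")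
      case True then show ?thesis using diag e XK by simp
    next
      case False
      have "C (C (V p) e) q = C (C (C (V p) r) (X (r,s))) (C (V s) q)"
        using e pK qK rsK r s by (simp add: C_assoc)
      also have "\<dots> = B"
      proof (cases "r = p")
        case True
        hence "s \<noteq> q" using False by simp
        then show ?thesis using distinct_ip[OF s q] r s pK rsK by simp
      next
        case False then show ?thesis using distinct_ip[OF p r] r s qK rsK by auto
      qed
      finally show ?thesis using XK by simp
    qed
  qed (use X pK qK XK in simp_all)
  have "C (C p (X (p,q))) (V q) \<in> GT X" unfolding GT_def using p q by auto
  hence "L (C (C p (X (p,q))) (V q)) (g X)" unfolding g_GT using fj_ub[of "GT X"] X by simp
  hence "L (C (C (V p) (C (C p (X (p,q))) (V q))) q) (C (C (V p) (g X)) q)"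
    using pK qK XK g_in[OF X] by (intro C_mono_l C_mono_r) simp_all
  thus "L (X (p,q)) (C (C (V p) (g X)) q)" using diag by simp
qed (use X g_in p q in simp_all)

lemma fg: assumes X: "X \<in> car (Mat S)" shows "f (g X) = X"
proof (rule PiE_ext)
  show "f (g X) \<in> IP \<times> IP \<rightarrow>\<^sub>E Is S" using f_in g_in X Mat_car by simp
  show "X \<in> IP \<times> IP \<rightarrow>\<^sub>E Is S" using X Mat_car by simp
  fix pq assume "pq \<in> IP \<times> IP"
  then obtain p q where pq: "pq = (p,q)" "p \<in> IP" "q \<in> IP" by blast
  show "f (g X) pq = X pq" using fg_pt[OF X pq(2,3)] pq by simp
qed


lemma Mat_ops:
  "jn (Mat S) X Y = restrict (\<lambda>pq. J (X pq) (Y pq)) (IP \<times> IP)"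
  "mt (Mat S) X Y = restrict (\<lambda>pq. M (X pq) (Y pq)) (IP \<times> IP)"
  "cmp (Mat S) X Y = restrict (\<lambda>(p,q). fjoin S ((\<lambda>r. M (X (p,r)) (Y (r,q))) ` IP)) (IP \<times> IP)"
  "pcm (Mat S) X = restrict (\<lambda>pq. N (X pq)) (IP \<times> IP)"
  "cnv (Mat S) X = restrict (\<lambda>(p,q). X (q,p)) (IP \<times> IP)"
  "bt (Mat S) = restrict (\<lambda>pq. B) (IP \<times> IP)"
  "tp (Mat S) = restrict (\<lambda>pq. T) (IP \<times> IP)"
  "un (Mat S) = restrict (\<lambda>(p,q). if p = q then T else B) (IP \<times> IP)"
  by (simp_all add: Mat_def Let_def)

lemma f_eqI: assumes "\<And>p q. p \<in> IP \<Longrightarrow> q \<in> IP \<Longrightarrow> C (C (V p) x) q = F (p,q)"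
  shows "f x = restrict F (IP \<times> IP)"
  unfolding f_iso_def by (rule restrict_ext) (use assms in auto)

lemma dedekind_r: assumes x: "x \<in> K" and y: "y \<in> K" and z: "z \<in> K"
  shows "L (M (C y x) z) (C (M y (C z (V x))) x)"
proof -
  have "L (M (C (V x) (V y)) (V z)) (C (V x) (M (V y) (C (V (V x)) (V z))))"
    using dedekind[of "V x" "V y" "V z"] x y z by simp
  hence "L (V (M (C y x) z)) (V (C (M y (C z (V x))) x))"
    using x y z by (simp add: V_M V_C)
  thus ?thesis using x y z by simp
qed

lemma f_J: "x \<in> K \<Longrightarrow> y \<in> K \<Longrightarrow> f (J x y) = jn (Mat S) (f x) (f y)"
  unfolding Mat_ops by (rule f_eqI) (simp add: C_J_distl C_J_distr)

lemma f_M: "x \<in> K \<Longrightarrow> y \<in> K \<Longrightarrow> f (M x y) = mt (Mat S) (f x) (f y)"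
  unfolding Mat_ops
proof (rule f_eqI)
  fix p q assume x: "x \<in> K" and y: "y \<in> K" and p: "p \<in> IP" and q: "q \<in> IP"
  have "C (C (V p) (M x y)) q = C (M (C (V p) x) (C (V p) y)) q"
    using inj_distl[of p x y] point_props(1)[OF ip_pt[OF p]] p x y by simp
  also have "\<dots> = M (C (C (V p) x) q) (C (C (V p) y) q)"
    using inj_distr[of q] point_props(1)[OF ip_pt[OF q]] p q x y by simp
  finally show "C (C (V p) (M x y)) q = (\<lambda>pq. M (f x pq) (f y pq)) (p, q)" using p q by simp
qed

lemma f_C: assumes x: "x \<in> K" and y: "y \<in> K" shows "f (C x y) = cmp (Mat S) (f x) (f y)"
  unfolding Mat_ops
proof (rule f_eqI)
  fix p q assume p: "p \<in> IP" and q: "q \<in> IP"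
  have pK: "p \<in> K" and qK: "q \<in> K" using p q by simp_all
  define Q where "Q = (\<lambda>r. M (C (C (V p) x) r) (C (C (V r) y) q)) ` IP"
  have QK: "Q \<subseteq> K" using x y p q by (auto simp: Q_def)
  have Qf: "finite Q" by (simp add: Q_def)
  have img: "(\<lambda>r. M (f x (p,r)) (f y (r,q))) ` IP = Q" unfolding Q_def
    by (rule image_cong) (use p q in auto)
  have elt: "C (C (C (V p) x) (C r (V r))) (C y q) = M (C (C (V p) x) r) (C (C (V r) y) q)"
    if r: "r \<in> IP" for r
  proof -
    have rK: "r \<in> K" using r by simp
    have "C (C (C (V p) x) (C r (V r))) (C y q) = C (C (C (V p) x) r) (C (C (V r) y) q)"
      using pK qK rK x y by (simp add: C_assoc)
    also have "\<dots> = M (C (C (V p) x) r) (C (C (V r) y) q)"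
      by (rule ideal_CM) (use pxq_ideal p q r x y in simp_all)
    finally show ?thesis .
  qed
  have "L (C (C (C (V p) x) (fjoin S R)) (C y q)) (fjoin S Q)"
  proof (rule fj_le_C)
    fix t assume "t \<in> R"
    then obtain r where r: "r \<in> IP" and t: "t = C r (V r)" by blast
    have "L (M (C (C (V p) x) r) (C (C (V r) y) q)) (fjoin S Q)"
      by (rule fj_ub) (use QK Qf r in \<open>auto simp: Q_def\<close>)
    thus "L (C (C (C (V p) x) t) (C y q)) (fjoin S Q)" using elt[OF r] t by simp
  qed (use pK qK x y QK Qf in simp_all)
  hence 1: "L (C (C (V p) (C x y)) q) (fjoin S Q)" using sum_rr pK qK x y by (simp add: C_assoc)
  have 2: "L (fjoin S Q) (C (C (V p) (C x y)) q)"
  proof (rule fj_lub)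
    fix e assume "e \<in> Q"
    then obtain r where r: "r \<in> IP" and e: "e = M (C (C (V p) x) r) (C (C (V r) y) q)"
      unfolding Q_def by blast
    have rK: "r \<in> K" using r by simp
    have "L (C (C (C (V p) x) (C r (V r))) (C y q)) (C (C (C (V p) x) U) (C y q))"
      using point_props(1)[OF ip_pt[OF r]] pK qK rK x y by (intro C_mono_l C_mono_r) simp_all
    thus "L e (C (C (V p) (C x y)) q)" using elt[OF r] e pK qK x y by (simp add: C_assoc)
  qed (use pK qK x y QK Qf in simp_all)
  have "C (C (V p) (C x y)) q = fjoin S Q"
    by (rule L_antisym) (use 1 2 pK qK x y QK Qf in simp_all)
  thus "C (C (V p) (C x y)) q = (\<lambda>(p,q). fjoin S ((\<lambda>r. M (f x (p,r)) (f y (r,q))) ` IP)) (p, q)"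
    using img by simp
qed


lemma f_N_pt: assumes x: "x \<in> K" and p: "p \<in> IP" and q: "q \<in> IP"
  shows "C (C (V p) (N x)) q = N (C (C (V p) x) q)"
proof (rule L_antisym)
  have pK: "p \<in> K" and qK: "q \<in> K" using p q by simp_all
  define a where "a = C (C (V p) x) q"
  define c where "c = N a"
  have aK: "a \<in> K" and cK: "c \<in> K" using pK qK x by (simp_all add: a_def c_def)
  have injp: "L (C p (V p)) U" and injq: "L (C q (V q)) U" using point_props(1) p q by simp_all
  have Nxx: "M (N x) x = B" using pcm_ax[of "N x" x] x by simp
  have "M (C (C (V p) (N x)) q) a = C (C (V p) (M (N x) x)) q"
    using inj_distl[of p "N x" x] inj_distr[of q "C (V p) (N x)" "C (V p) x"] injp injq pK qK x
    by (simp add: a_def)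
  also have "\<dots> = B" using Nxx pK qK by simp
  finally show "L (C (C (V p) (N x)) q) (N (C (C (V p) x) q))"
    using pcm_ax[of "C (C (V p) (N x)) q" a] pK qK x aK by (simp add: a_def)
  have ca: "M c a = B" using pcm_ax[of c a] cK aK by (simp add: c_def)
  have d1: "L (M (C p (C c (V q))) x) (C p (M (C c (V q)) (C (V p) x)))"
    using dedekind[of p "C c (V q)" x] pK qK cK x by simp
  have d2: "L (M (C c (V q)) (C (V p) x)) (C (M c (C (C (V p) x) q)) (V q))"
    using dedekind_r[of "V q" c "C (V p) x"] pK qK cK x by simp
  hence "M (C c (V q)) (C (V p) x) = B" using ca qK cK pK x by (simp add: a_def)
  hence "M (C p (C c (V q))) x = B" using d1 pK qK cK x by simp
  hence 3: "L (C p (C c (V q))) (N x)" using pcm_ax[of "C p (C c (V q))" x] pK qK cK x by simp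
  have "L (C (C U c) U) (C (C (C (V p) p) c) (C (V q) q))"
    using point_props(2) p q pK qK cK by (intro C_mono C_mono_l) simp_all
  hence 4: "L c (C (C (V p) (C p (C c (V q)))) q)" using pK qK cK by (simp add: C_assoc)
  have "L (C (C (V p) (C p (C c (V q)))) q) (C (C (V p) (N x)) q)"
    using 3 pK qK cK x by (intro C_mono_l C_mono_r) simp_all
  thus "L (N (C (C (V p) x) q)) (C (C (V p) (N x)) q)"
    using 4 L_trans[of c "C (C (V p) (C p (C c (V q)))) q" "C (C (V p) (N x)) q"] pK qK cK x
    by (simp add: c_def a_def)
qed (use x p q in simp_all)

lemma f_N: "x \<in> K \<Longrightarrow> f (N x) = pcm (Mat S) (f x)"
  unfolding Mat_ops by (rule f_eqI) (simp add: f_N_pt)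

lemma f_V: assumes x: "x \<in> K" shows "f (V x) = cnv (Mat S) (f x)"
  unfolding Mat_ops
proof (rule f_eqI)
  fix p q assume p: "p \<in> IP" and q: "q \<in> IP"
  have pK: "p \<in> K" and qK: "q \<in> K" using p q by simp_all
  have "V (C (C (V q) x) p) = C (C (V p) (V x)) q" using pK qK x by (simp add: V_C C_assoc)
  moreover have "V (C (C (V q) x) p) = C (C (V q) x) p"
    by (rule ideal_V) (use pxq_ideal q p x in simp_all)
  ultimately show "C (C (V p) (V x)) q = (\<lambda>(p,q). f x (q,p)) (p, q)" using p q by simp
qed

lemma f_B: "f B = bt (Mat S)"
  unfolding Mat_ops by (rule f_eqI) simp

lemma f_T: "f T = tp (Mat S)"
  unfolding Mat_ops by (rule f_eqI) (simp add: pt_VpT pt_Tp)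

lemma f_U: "f U = un (Mat S)"
  unfolding Mat_ops by (rule f_eqI) (auto simp: pt_VpP distinct_ip)

lemma f_iso: "sra_iso S (Mat S) f"
  unfolding sra_iso_def
proof (intro conjI ballI)
  show "bij_betw f K (car (Mat S))"
    by (rule bij_betwI[where g=g]) (auto simp: f_in g_in gf fg)
qed (simp_all add: f_J f_M f_C f_N f_V f_B f_T f_U)

end


theorem mainTheorem1:
  fixes S :: "'a sra"
  assumes "stone_ra S"
    and "point_axiom S"
  shows "stone_ra (Mat S) \<and> sra_iso S (Mat S) (f_iso S) \<and> sra_iso (Mat S) S (g_iso S)"
proof -
  interpret SRP S using assms by (simp add: SRP_def SR_def SRP_axioms_def)
  have 1: "sra_iso S (Mat S) (f_iso S)" by (rule f_iso)
  have 2: "stone_ra (Mat S)" by (rule iso_transfer[OF assms(1) 1])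
  have 3: "sra_iso (Mat S) S (g_iso S)"
    by (rule iso_inverse[OF assms(1) 1]) (auto simp: gf g_in fg)
  show ?thesis using 1 2 3 by simp
qed

end
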